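(* Let $A=\langle Q,F,\delta,\gamma\rangle$ be a well-structured pomset automaton and let $q\xrightarrow{U}_A q'$ be a run. Then: (i) the run is trivial if and only if $U$ is empty; (ii) it is a sequential unit run if and only if $U$ is primitive; (iii) it is a composite run if and only if $U$ is sequential; (iv) it is a parallel unit run if and only if $U$ is parallel.
   Context: Fix a finite alphabet $\Sigma$. Pomsets are isomorphism classes of finite labelled posets over $\Sigma$; $1$ is the empty pomset; a pomset is primitive if it has exactly one element. Sequential composition $U\cdot V$ is the disjoint union with every element of $U$ below every element of $V$; parallel composition $U\parallel V$ is the disjoint union of the orders. $\mathsf{SP}(\Sigma)$ is the smallest set containing $1$ and the primitive pomsets closed under $\cdot,\parallel$. A pomset $U$ is sequential if $U=U_1\cdot U_2$ for non-empty $U_1,U_2$, and parallel if $U=U_1\parallel U_2$ for non-empty $U_1,U_2$. A pomset automaton is $A=\langle Q,F,\delta,\gamma\rangle$ with $F\subseteq Q$, $\delta:Q\times\Sigma\to2^Q$, $\gamma:Q\times\mathbb{M}(Q)\to2^Q$ ($\mathbb{M}(Q)$ finite multisets over $Q$), each $q$ having finitely many $\phi$ with $\gamma(q,\phi)\ne\emptyset$. The run relation $\to_A\subseteq Q\times\mathsf{SP}(\Sigma)\times Q$ is the smallest relation closed under the rules: (R1) $q\xrightarrow{1}_A q$; (R2) $q\xrightarrow{a}_A q'$ if $q'\in\delta(q,a)$; (R3) $q\xrightarrow{U\cdot V}_A q'$ if $q\xrightarrow{U}_A q''$ and $q''\xrightarrow{V}_A q'$; (R4) $q\xrightarrow{U_1\parallel\cdots\parallel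 U_n}_A q'$ if $q'\in\gamma(q,\{\!|q_1,\dots,q_n|\!\})$ and for each $i$ some $q_i'\in F$ has $q_i\xrightarrow{U_i}_A q_i'$. A run $q\xrightarrow{U}_A q'$ is trivial if it follows by (R1) (i.e. $q=q'$ and $U=1$); a sequential unit run if it follows by (R2) (i.e. $U=a\in\Sigma$ and $q'\in\delta(q,a)$); a parallel unit run if it follows by (R4); and composite if there are $U_1,U_2$ and $q''$ with $U=U_1\cdot U_2$, $q\xrightarrow{U_1}_A q''$, $q''\xrightarrow{U_2}_A q'$, neither of which is trivial. $A$ is well-structured if for all $q,q'\in Q$, $\phi\in\mathbb{M}(Q)$ with $q'\in\phi$ and $\gamma(q,\phi)\ne\emptyset$: $|\phi|\ge2$, $q'\notin F$, and $\gamma(q',\phi')\cap F=\emptyset$ for every $\phi'\in\mathbb{M}(Q)$. *)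

theory Defs
  imports Main "HOL-Library.Multiset"
begin

text \<open>A pomset is an isomorphism class of finite labelled posets. We work with
concrete representatives whose carrier is a finite set of natural numbers, and
state every notion up to isomorphism.\<close>

record 'a lposet =
  car :: "nat set"
  le  :: "(nat \<times> nat) set"
  lbl :: "nat \<Rightarrow> 'a"

definition is_pomset :: "'a lposet \<Rightarrow> bool" where
  "is_pomset P \<longleftrightarrow> finite (car P) \<and> le P \<subseteq> car P \<times> car P \<and>
     refl_on (car P) (le P) \<and> antisym (le P) \<and> trans (le P)"

definition pom_iso :: "'a lposet \<Rightarrow> 'a lposet \<Rightarrow> bool" where
  "pom_iso P R \<longleftrightarrow> (\<exists>f. bij_betw f (car P) (car R) \<and>
     (\<forall>x\<in>car P. lbl R (f x) = lbl P x) \<and>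
     (\<forall>x\<in>car P. \<forall>y\<in>car P. (x, y) \<in> le P \<longleftrightarrow> (f x, f y) \<in> le R))"

definition pempty :: "'a lposet" where
  "pempty = \<lparr>car = {}, le = {}, lbl = (\<lambda>_. undefined)\<rparr>"

definition prim :: "'a \<Rightarrow> 'a lposet" where
  "prim a = \<lparr>car = {0}, le = {(0, 0)}, lbl = (\<lambda>_. a)\<rparr>"

text \<open>Disjoint union: the left component is placed on even numbers, the right one on odd numbers.\<close>
definition dlbl :: "'a lposet \<Rightarrow> 'a lposet \<Rightarrow> nat \<Rightarrow> 'a" where
  "dlbl U V n = (if even n then lbl U (n div 2) else lbl V (n div 2))"

definition par_comp :: "'a lposet \<Rightarrow> 'a lposet \<Rightarrow> 'a lposet" where
  "par_comp U V = \<lparr>car = (\<lambda>x. 2 * x) ` car U \<union> (\<lambda>x. 2 * x + 1) ` car V,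
     le = (\<lambda>(x, y). (2 * x, 2 * y)) ` le U \<union> (\<lambda>(x, y). (2 * x + 1, 2 * y + 1)) ` le V,
     lbl = dlbl U V\<rparr>"

definition seq_comp :: "'a lposet \<Rightarrow> 'a lposet \<Rightarrow> 'a lposet" where
  "seq_comp U V = \<lparr>car = (\<lambda>x. 2 * x) ` car U \<union> (\<lambda>x. 2 * x + 1) ` car V,
     le = (\<lambda>(x, y). (2 * x, 2 * y)) ` le U \<union> (\<lambda>(x, y). (2 * x + 1, 2 * y + 1)) ` le V
          \<union> {(2 * x, 2 * y + 1) | x y. x \<in> car U \<and> y \<in> car V},
     lbl = dlbl U V\<rparr>"

fun par_list :: "'a lposet list \<Rightarrow> 'a lposet" where
  "par_list [] = pempty"
| "par_list (U # Us) = par_comp U (par_list Us)"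

definition is_empty_pomset :: "'a lposet \<Rightarrow> bool" where
  "is_empty_pomset U \<longleftrightarrow> car U = {}"

definition is_primitive :: "'a lposet \<Rightarrow> bool" where
  "is_primitive U \<longleftrightarrow> card (car U) = 1"

definition is_sequential :: "'a lposet \<Rightarrow> bool" where
  "is_sequential U \<longleftrightarrow> (\<exists>U1 U2. is_pomset U1 \<and> is_pomset U2 \<and>
     \<not> is_empty_pomset U1 \<and> \<not> is_empty_pomset U2 \<and> pom_iso U (seq_comp U1 U2))"

definition is_parallel :: "'a lposet \<Rightarrow> bool" where
  "is_parallel U \<longleftrightarrow> (\<exists>U1 U2. is_pomset U1 \<and> is_pomset U2 \<and>
     \<not> is_empty_pomset U1 \<and> \<not> is_empty_pomset U2 \<and> pom_iso U (par_comp U1 U2))"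

text \<open>An automaton is given by its accepting states \<open>F\<close>, sequential transitions \<open>\<delta>\<close>
and parallel transitions \<open>\<gamma>\<close>; the state space is the type \<open>'q\<close>.\<close>

definition pomset_automaton ::
  "'q set \<Rightarrow> ('q \<Rightarrow> 'a \<Rightarrow> 'q set) \<Rightarrow> ('q \<Rightarrow> 'q multiset \<Rightarrow> 'q set) \<Rightarrow> bool" where
  "pomset_automaton F \<delta> \<gamma> \<longleftrightarrow> (\<forall>q. finite {\<phi>. \<gamma> q \<phi> \<noteq> {}})"

inductive run ::
  "'q set \<Rightarrow> ('q \<Rightarrow> 'a \<Rightarrow> 'q set) \<Rightarrow> ('q \<Rightarrow> 'q multiset \<Rightarrow> 'q set) \<Rightarrow>
   'q \<Rightarrow> 'a lposet \<Rightarrow> 'q \<Rightarrow> bool"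
  for F \<delta> \<gamma> where
  R1: "is_pomset W \<Longrightarrow> pom_iso W pempty \<Longrightarrow> run F \<delta> \<gamma> q W q"
| R2: "is_pomset W \<Longrightarrow> pom_iso W (prim a) \<Longrightarrow> q' \<in> \<delta> q a \<Longrightarrow> run F \<delta> \<gamma> q W q'"
| R3: "is_pomset W \<Longrightarrow> pom_iso W (seq_comp U V) \<Longrightarrow> run F \<delta> \<gamma> q U q'' \<Longrightarrow>
       run F \<delta> \<gamma> q'' V q' \<Longrightarrow> run F \<delta> \<gamma> q W q'"
| R4: "is_pomset W \<Longrightarrow> pom_iso W (par_list (map snd xs)) \<Longrightarrow>
       q' \<in> \<gamma> q (mset (map fst xs)) \<Longrightarrow>
       (\<forall>i<length xs. \<exists>qf\<in>F. run F \<delta> \<gamma> (fst (xs ! i)) (snd (xs ! i)) qf) \<Longrightarrow>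
       run F \<delta> \<gamma> q W q'"

definition trivial_run where
  "trivial_run F \<delta> \<gamma> q U q' \<longleftrightarrow> q = q' \<and> pom_iso U pempty"

definition seq_unit_run where
  "seq_unit_run F \<delta> \<gamma> q U q' \<longleftrightarrow> (\<exists>a. pom_iso U (prim a) \<and> q' \<in> \<delta> q a)"

definition par_unit_run where
  "par_unit_run F \<delta> \<gamma> q U q' \<longleftrightarrow> (\<exists>xs. pom_iso U (par_list (map snd xs)) \<and>
     q' \<in> \<gamma> q (mset (map fst xs)) \<and>
     (\<forall>i<length xs. \<exists>qf\<in>F. run F \<delta> \<gamma> (fst (xs ! i)) (snd (xs ! i)) qf))"

definition composite_run where
  "composite_run F \<delta> \<gamma> q U q' \<longleftrightarrow> (\<exists>U1 U2 q''. pom_iso U (seq_comp U1 U2) \<and>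
     run F \<delta> \<gamma> q U1 q'' \<and> run F \<delta> \<gamma> q'' U2 q' \<and>
     \<not> trivial_run F \<delta> \<gamma> q U1 q'' \<and> \<not> trivial_run F \<delta> \<gamma> q'' U2 q')"

definition well_structured ::
  "'q set \<Rightarrow> ('q \<Rightarrow> 'q multiset \<Rightarrow> 'q set) \<Rightarrow> bool" where
  "well_structured F \<gamma> \<longleftrightarrow>
     (\<forall>q \<phi>. \<gamma> q \<phi> \<noteq> {} \<longrightarrow> size \<phi> \<ge> 2) \<and>
     (\<forall>q q' \<phi>. q' \<in># \<phi> \<and> \<gamma> q \<phi> \<noteq> {} \<longrightarrow> q' \<notin> F \<and> (\<forall>\<phi>'. \<gamma> q' \<phi>' \<inter> F = {}))"

end

theory Submission
  imports Defs
begin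


lemma pom_iso_sym: "pom_iso P R \<Longrightarrow> pom_iso R P"
proof -
  assume "pom_iso P R"
  then obtain f where f: "bij_betw f (car P) (car R)" "\<forall>x\<in>car P. lbl R (f x) = lbl P x"
     "\<forall>x\<in>car P. \<forall>y\<in>car P. (x, y) \<in> le P \<longleftrightarrow> (f x, f y) \<in> le R" unfolding pom_iso_def by blast
  let ?g = "inv_into (car P) f"
  have g: "bij_betw ?g (car R) (car P)" using f(1) by (simp add: bij_betw_inv_into)
  have fg: "\<And>y. y \<in> car R \<Longrightarrow> f (?g y) = y" using f(1) by (meson bij_betw_inv_into_right)
  have gin: "\<And>y. y \<in> car R \<Longrightarrow> ?g y \<in> car P" using g by (meson bij_betwE)
  show ?thesis unfolding pom_iso_def
    apply (rule exI[of _ ?g])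
    using g fg gin f(2,3) by metis
qed

lemma pom_iso_trans: "pom_iso P R \<Longrightarrow> pom_iso R S \<Longrightarrow> pom_iso P S"
proof -
  assume "pom_iso P R" "pom_iso R S"
  then obtain f g where f: "bij_betw f (car P) (car R)" "\<forall>x\<in>car P. lbl R (f x) = lbl P x"
     "\<forall>x\<in>car P. \<forall>y\<in>car P. (x, y) \<in> le P \<longleftrightarrow> (f x, f y) \<in> le R"
    and g: "bij_betw g (car R) (car S)" "\<forall>x\<in>car R. lbl S (g x) = lbl R x"
     "\<forall>x\<in>car R. \<forall>y\<in>car R. (x, y) \<in> le R \<longleftrightarrow> (g x, g y) \<in> le S" unfolding pom_iso_def by blast
  have fin: "\<And>x. x \<in> car P \<Longrightarrow> f x \<in> car R" using f(1) by (meson bij_betwE)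
  show ?thesis unfolding pom_iso_def
    apply (rule exI[of _ "g \<circ> f"])
    using bij_betw_trans[OF f(1) g(1)] f(2,3) g(2,3) fin by auto
qed

lemma pom_iso_refl: "pom_iso P P"
  unfolding pom_iso_def by (rule exI[of _ id]) auto

lemma pom_iso_card: "pom_iso P R \<Longrightarrow> card (car P) = card (car R)"
  unfolding pom_iso_def using bij_betw_same_card by blast

lemma pom_iso_finite: "pom_iso P R \<Longrightarrow> finite (car P) \<longleftrightarrow> finite (car R)"
  unfolding pom_iso_def using bij_betw_finite by blast

lemma pom_iso_empty: "pom_iso P R \<Longrightarrow> car P = {} \<longleftrightarrow> car R = {}"
  unfolding pom_iso_def by (metis bij_betw_empty1 bij_betw_empty2)

lemma pempty_pomset: "is_pomset pempty"
  unfolding is_pomset_def pempty_def by (auto simp: refl_on_def antisym_def trans_def)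

lemma par_comp_pomset:
  assumes "is_pomset U" "is_pomset V" shows "is_pomset (par_comp U V)"
proof -
  have a: "finite (car U)" "le U \<subseteq> car U \<times> car U" "refl_on (car U) (le U)" "antisym (le U)" "trans (le U)"
   and b: "finite (car V)" "le V \<subseteq> car V \<times> car V" "refl_on (car V) (le V)" "antisym (le V)" "trans (le V)"
    using assms unfolding is_pomset_def by auto
  let ?L = "(\<lambda>(x, y). (2 * x, 2 * y)) ` le U \<union> (\<lambda>(x, y). (2 * x + 1, 2 * y + 1)) ` le V"
  let ?C = "(\<lambda>x. 2 * x) ` car U \<union> (\<lambda>x. 2 * (x::nat) + 1) ` car V"
  have m: "(p, r) \<in> ?L \<longleftrightarrow> (even p \<and> even r \<and> (p div 2, r div 2) \<in> le U) \<or> (odd p \<and> odd r \<and> (p div 2, r div 2) \<in> le V)" for p r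
  proof
    assume "(p, r) \<in> ?L" thus "(even p \<and> even r \<and> (p div 2, r div 2) \<in> le U) \<or> (odd p \<and> odd r \<and> (p div 2, r div 2) \<in> le V)"
      by auto
  next
    assume h: "(even p \<and> even r \<and> (p div 2, r div 2) \<in> le U) \<or> (odd p \<and> odd r \<and> (p div 2, r div 2) \<in> le V)"
    show "(p, r) \<in> ?L"
    proof (cases "even p")
      case True
      hence "(p, r) = (\<lambda>(x, y). (2 * x, 2 * y)) (p div 2, r div 2)" using h by auto
      thus ?thesis using h True by blast
    next
      case False
      hence "(p, r) = (\<lambda>(x, y). (2 * x + 1, 2 * y + 1)) (p div 2, r div 2)" using h by auto
      thus ?thesis using h False by blast
    qed
  qed
  have "finite ?C" using a b by simp
  moreover have "?L \<subseteq> ?C \<times> ?C" using a(2) b(2) by auto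
  moreover have "refl_on ?C ?L" using a(3) b(3) unfolding refl_on_def by auto
  moreover have "antisym ?L" unfolding antisym_def m
    using a(4) b(4) unfolding antisym_def by (metis dvd_mult_div_cancel odd_two_times_div_two_succ)
  moreover have "trans ?L" unfolding trans_def m
    using a(5) b(5) unfolding trans_def by blast
  ultimately show ?thesis unfolding is_pomset_def par_comp_def by simp
qed




lemma run_pomset: "run F \<delta> \<gamma> q W q' \<Longrightarrow> is_pomset W"
  by (erule run.cases) auto

lemma par_list_pomset: "\<forall>W\<in>set Ws. is_pomset W \<Longrightarrow> is_pomset (par_list Ws)"
  by (induction Ws) (auto simp: pempty_pomset par_comp_pomset)

lemma seq_empty_left:
  assumes "is_pomset V" "car V = {}" shows "pom_iso (seq_comp V W) W"
proof -
  have lv: "le V = {}" using assms unfolding is_pomset_def by auto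
  have c: "car (seq_comp V W) = (\<lambda>x. 2 * x + 1) ` car W" using assms(2) by (simp add: seq_comp_def)
  have l: "le (seq_comp V W) = (\<lambda>(x, y). (2 * x + 1, 2 * y + 1)) ` le W" using assms(2) lv by (simp add: seq_comp_def)
  have bij: "bij_betw (\<lambda>n. n div 2) ((\<lambda>x. 2 * x + 1) ` car W) (car W)"
    by (rule bij_betw_byWitness[of _ "\<lambda>x. 2 * x + 1"]) auto
  have lb: "\<forall>x\<in>car (seq_comp V W). lbl W (x div 2) = lbl (seq_comp V W) x"
    unfolding c by (auto simp: seq_comp_def dlbl_def)
  have le: "\<forall>x\<in>car (seq_comp V W). \<forall>y\<in>car (seq_comp V W). (x, y) \<in> le (seq_comp V W) \<longleftrightarrow> (x div 2, y div 2) \<in> le W"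
    unfolding c l by auto
  show ?thesis unfolding pom_iso_def using bij lb le c by metis
qed

lemma seq_empty_right:
  assumes "is_pomset W" "car W = {}" shows "pom_iso (seq_comp V W) V"
proof -
  have lv: "le W = {}" using assms unfolding is_pomset_def by auto
  have c: "car (seq_comp V W) = (\<lambda>x. 2 * x) ` car V" using assms(2) by (simp add: seq_comp_def)
  have l: "le (seq_comp V W) = (\<lambda>(x, y). (2 * x, 2 * y)) ` le V" using assms(2) lv by (simp add: seq_comp_def)
  have bij: "bij_betw (\<lambda>n. n div 2) ((\<lambda>x. 2 * x) ` car V) (car V)"
    by (rule bij_betw_byWitness[of _ "\<lambda>x. 2 * x"]) auto
  have lb: "\<forall>x\<in>car (seq_comp V W). lbl V (x div 2) = lbl (seq_comp V W) x"
    unfolding c by (auto simp: seq_comp_def dlbl_def)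
  have le: "\<forall>x\<in>car (seq_comp V W). \<forall>y\<in>car (seq_comp V W). (x, y) \<in> le (seq_comp V W) \<longleftrightarrow> (x div 2, y div 2) \<in> le V"
    unfolding c l by auto
  show ?thesis unfolding pom_iso_def using bij lb le c by metis
qed

definition disc :: "'a lposet \<Rightarrow> bool" where
  "disc P \<longleftrightarrow> (\<exists>A B. A \<union> B = car P \<and> A \<inter> B = {} \<and> A \<noteq> {} \<and> B \<noteq> {} \<and>
     (\<forall>a\<in>A. \<forall>b\<in>B. (a, b) \<notin> le P \<and> (b, a) \<notin> le P))"

lemma disc_iso: assumes "pom_iso P R" "disc R" shows "disc P"
proof -
  obtain f where f: "bij_betw f (car P) (car R)"
     "\<forall>x\<in>car P. \<forall>y\<in>car P. (x, y) \<in> le P \<longleftrightarrow> (f x, f y) \<in> le R" using assms(1) unfolding pom_iso_def by blast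
  have im: "f ` car P = car R" using f(1) unfolding bij_betw_def by simp
  obtain A B where AB: "A \<union> B = car R" "A \<inter> B = {}" "A \<noteq> {}" "B \<noteq> {}"
     "\<forall>a\<in>A. \<forall>b\<in>B. (a, b) \<notin> le R \<and> (b, a) \<notin> le R" using assms(2) unfolding disc_def by blast
  define A' where "A' = {x\<in>car P. f x \<in> A}"
  define B' where "B' = {x\<in>car P. f x \<in> B}"
  have 1: "A' \<noteq> {}"
  proof -
    obtain a where "a \<in> A" using AB(3) by blast
    hence "a \<in> f ` car P" using AB(1) im by blast
    then obtain x where "x \<in> car P" "f x = a" by blast
    thus ?thesis unfolding A'_def using \<open>a \<in> A\<close> by blast
  qed
  have 2: "B' \<noteq> {}"
  proof -
    obtain a where "a \<in> B" using AB(4) by blast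
    hence "a \<in> f ` car P" using AB(1) im by blast
    then obtain x where "x \<in> car P" "f x = a" by blast
    thus ?thesis unfolding B'_def using \<open>a \<in> B\<close> by blast
  qed
  have 3: "A' \<union> B' = car P"
  proof
    show "A' \<union> B' \<subseteq> car P" unfolding A'_def B'_def by blast
    show "car P \<subseteq> A' \<union> B'"
    proof
      fix x assume "x \<in> car P"
      hence "f x \<in> A \<union> B" using AB(1) im by blast
      thus "x \<in> A' \<union> B'" unfolding A'_def B'_def using \<open>x \<in> car P\<close> by blast
    qed
  qed
  have 4: "A' \<inter> B' = {}" using AB(2) unfolding A'_def B'_def by blast
  have 5: "\<forall>a\<in>A'. \<forall>b\<in>B'. (a, b) \<notin> le P \<and> (b, a) \<notin> le P"
  proof (intro ballI)
    fix a b assume a: "a \<in> A'" and b: "b \<in> B'"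
    have "(f a, f b) \<notin> le R \<and> (f b, f a) \<notin> le R" using a b AB(5) unfolding A'_def B'_def by blast
    moreover have "a \<in> car P" "b \<in> car P" using a b unfolding A'_def B'_def by auto
    ultimately show "(a, b) \<notin> le P \<and> (b, a) \<notin> le P" using f(2) by blast
  qed
  show ?thesis unfolding disc_def using 1 2 3 4 5 by blast
qed

lemma par_disc: assumes "car U \<noteq> {}" "car V \<noteq> {}" shows "disc (par_comp U V)"
  unfolding disc_def
  apply (rule exI[of _ "(\<lambda>x. 2 * x) ` car U"], rule exI[of _ "(\<lambda>x. 2 * x + 1) ` car V"])
  using assms by (auto simp: par_comp_def; presburger)

lemma seq_not_disc: assumes "car U \<noteq> {}" "car V \<noteq> {}" shows "\<not> disc (seq_comp U V)"
proof
  assume "disc (seq_comp U V)"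
  then obtain A B where AB: "A \<union> B = car (seq_comp U V)" "A \<inter> B = {}" "A \<noteq> {}" "B \<noteq> {}"
     "\<forall>a\<in>A. \<forall>b\<in>B. (a, b) \<notin> le (seq_comp U V) \<and> (b, a) \<notin> le (seq_comp U V)" unfolding disc_def by blast
  define X where "X = (\<lambda>x. 2 * x) ` car U"
  define Y where "Y = (\<lambda>x. 2 * x + 1) ` car V"
  have cmp: "\<And>x y. x \<in> X \<Longrightarrow> y \<in> Y \<Longrightarrow> (x, y) \<in> le (seq_comp U V)"
    unfolding seq_comp_def X_def Y_def by auto
  have C: "A \<union> B = X \<union> Y" using AB(1) unfolding seq_comp_def X_def Y_def by simp
  have nc: "\<And>a b. a \<in> A \<Longrightarrow> b \<in> B \<Longrightarrow> \<not> (a \<in> X \<and> b \<in> Y) \<and> \<not> (a \<in> Y \<and> b \<in> X)"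
    using cmp AB(5) by blast
  obtain x0 where x0: "x0 \<in> X" using assms(1) unfolding X_def by blast
  obtain y0 where y0: "y0 \<in> Y" using assms(2) unfolding Y_def by blast
  obtain a where a: "a \<in> A" using AB(3) by blast
  obtain b where b: "b \<in> B" using AB(4) by blast
  have aXY: "a \<in> X \<or> a \<in> Y" using a C by blast
  have bXY: "b \<in> X \<or> b \<in> Y" using b C by blast
  have x0AB: "x0 \<in> A \<or> x0 \<in> B" using x0 C by blast
  have y0AB: "y0 \<in> A \<or> y0 \<in> B" using y0 C by blast
  show False
  proof (cases "a \<in> X")
    case True
    hence bX: "b \<in> X" using nc[OF a b] bXY by blast
    show False using y0AB
    proof
      assume "y0 \<in> A" thus False using nc[OF _ b] bX y0 by blast
    next
      assume "y0 \<in> B" thus False using nc[OF a] True y0 by blast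
    qed
  next
    case False
    hence aY: "a \<in> Y" using aXY by blast
    hence bY: "b \<in> Y" using nc[OF a b] bXY by blast
    show False using x0AB
    proof
      assume "x0 \<in> A" thus False using nc[OF _ b] bY x0 by blast
    next
      assume "x0 \<in> B" thus False using nc[OF a] aY x0 by blast
    qed
  qed
qed

lemma seq_par_excl: "is_sequential U \<Longrightarrow> is_parallel U \<Longrightarrow> False"
  unfolding is_sequential_def is_parallel_def is_empty_pomset_def
  by (meson disc_iso par_disc pom_iso_sym pom_iso_trans seq_not_disc)

lemma two_card: assumes "finite S" "a \<in> S" "b \<in> S" "a \<noteq> b" shows "card S \<ge> 2"
proof -
  have "card {a, b} \<le> card S" using assms by (intro card_mono) auto
  thus ?thesis using assms(4) by simp
qed

lemma seq_card: assumes "finite (car U)" "is_sequential U" shows "card (car U) \<ge> 2"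
proof -
  obtain U1 U2 where u: "car U1 \<noteq> {}" "car U2 \<noteq> {}" "pom_iso U (seq_comp U1 U2)"
    using assms(2) unfolding is_sequential_def is_empty_pomset_def by blast
  obtain x y where "x \<in> car U1" "y \<in> car U2" using u by blast
  hence "2 * x \<in> car (seq_comp U1 U2)" "2 * y + 1 \<in> car (seq_comp U1 U2)" unfolding seq_comp_def by auto
  moreover have "finite (car (seq_comp U1 U2))" using u(3) assms(1) pom_iso_finite by blast
  moreover have "2 * x \<noteq> 2 * y + 1" by presburger
  ultimately have "card (car (seq_comp U1 U2)) \<ge> 2" by (metis two_card)
  thus ?thesis using pom_iso_card[OF u(3)] by simp
qed

lemma par_card: assumes "finite (car U)" "is_parallel U" shows "card (car U) \<ge> 2"
proof -
  obtain U1 U2 where u: "car U1 \<noteq> {}" "car U2 \<noteq> {}" "pom_iso U (par_comp U1 U2)"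
    using assms(2) unfolding is_parallel_def is_empty_pomset_def by blast
  obtain x y where "x \<in> car U1" "y \<in> car U2" using u by blast
  hence "2 * x \<in> car (par_comp U1 U2)" "2 * y + 1 \<in> car (par_comp U1 U2)" unfolding par_comp_def by auto
  moreover have "finite (car (par_comp U1 U2))" using u(3) assms(1) pom_iso_finite by blast
  moreover have "2 * x \<noteq> 2 * y + 1" by presburger
  ultimately have "card (car (par_comp U1 U2)) \<ge> 2" by (metis two_card)
  thus ?thesis using pom_iso_card[OF u(3)] by simp
qed

lemma car_par_comp_empty: "car (par_comp U V) = {} \<longleftrightarrow> car U = {} \<and> car V = {}"
  unfolding par_comp_def by auto



lemma empty_iso: "is_pomset U \<Longrightarrow> car U = {} \<Longrightarrow> pom_iso U pempty"
  unfolding pom_iso_def pempty_def by (rule exI[of _ id]) auto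

lemma empty_run:
  assumes ws: "well_structured F \<gamma>"
  shows "run F \<delta> \<gamma> q W q' \<Longrightarrow> car W = {} \<Longrightarrow> q = q'"
proof (induction rule: run.induct)
  case (R1 W q)
  then show ?case by simp
next
  case (R2 W a q' q)
  have "car (prim a) \<noteq> {}" by (simp add: prim_def)
  then show ?case using pom_iso_empty[OF R2(2)] R2(4) by simp
next
  case (R3 W U V q q'' q')
  have "car (seq_comp U V) = {}" using R3(2,7) pom_iso_empty by blast
  hence "car U = {}" "car V = {}" unfolding seq_comp_def by auto
  moreover have "car U = {} \<Longrightarrow> q = q''" by (rule R3.IH(1))
  moreover have "car V = {} \<Longrightarrow> q'' = q'" by (rule R3.IH(2))
  ultimately show ?case by simp
next
  case (R4 W xs q' q)
  have e: "car (par_list (map snd xs)) = {}" using R4(2,5) pom_iso_empty by blast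
  show ?case
  proof (cases xs)
    case Nil
    have "\<gamma> q {#} \<noteq> {}" using R4(3) Nil by auto
    hence "size ({#}::'a multiset) \<ge> 2" using ws unfolding well_structured_def by blast
    then show ?thesis by simp
  next
    case (Cons x rest)
    have ex: "car (snd x) = {}" using e Cons by (simp add: car_par_comp_empty)
    have "0 < length xs" using Cons by simp
    with R4(4) obtain qf where qf: "qf \<in> F" "car (snd (xs ! 0)) = {} \<longrightarrow> fst (xs ! 0) = qf" by blast
    have fx: "fst x \<in> F" using qf ex Cons by simp
    have "fst x \<in># mset (map fst xs)" using Cons by simp
    moreover have "\<gamma> q (mset (map fst xs)) \<noteq> {}" using R4(3) by blast
    ultimately have "fst x \<notin> F" using ws unfolding well_structured_def by blast
    then show ?thesis using fx by simp
  qed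
qed

lemma comp_nonempty:
  assumes ws: "well_structured F \<gamma>" and "q' \<in> \<gamma> q (mset (map fst xs))"
    and "\<forall>i<length xs. \<exists>qf\<in>F. run F \<delta> \<gamma> (fst (xs ! i)) (snd (xs ! i)) qf"
  shows "length xs \<ge> 2 \<and> (\<forall>i<length xs. car (snd (xs ! i)) \<noteq> {} \<and> is_pomset (snd (xs ! i)))"
proof -
  have ne: "\<gamma> q (mset (map fst xs)) \<noteq> {}" using assms(2) by blast
  have "size (mset (map fst xs)) \<ge> 2" using ne ws unfolding well_structured_def by blast
  hence "length xs \<ge> 2" by simp
  moreover have "car (snd (xs ! i)) \<noteq> {} \<and> is_pomset (snd (xs ! i))" if i: "i < length xs" for i
  proof -
    obtain qf where qf: "qf \<in> F" "run F \<delta> \<gamma> (fst (xs ! i)) (snd (xs ! i)) qf" using assms(3) i by blast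
    have "fst (xs ! i) \<in># mset (map fst xs)" using i by simp
    hence "fst (xs ! i) \<notin> F" using ne ws unfolding well_structured_def by blast
    hence "fst (xs ! i) \<noteq> qf" using qf(1) by blast
    thus ?thesis using empty_run[OF ws qf(2)] run_pomset[OF qf(2)] by blast
  qed
  ultimately show ?thesis by blast
qed

lemma par_list_parallel:
  assumes "length Ws \<ge> 2" "\<forall>V\<in>set Ws. car V \<noteq> {} \<and> is_pomset V" "pom_iso W (par_list Ws)"
  shows "is_parallel W"
proof -
  from assms(1) obtain x Ws' where W1: "Ws = x # Ws'" by (cases Ws) auto
  with assms(1) obtain y rest where Ws': "Ws' = y # rest" by (cases Ws') auto
  have Ws: "Ws = x # y # rest" using W1 Ws' by simp
  have a1: "car x \<noteq> {}" "is_pomset x" using assms(2) Ws by auto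
  have a2: "car (par_list (y # rest)) \<noteq> {}" using assms(2) Ws by (simp add: car_par_comp_empty)
  have a3: "is_pomset (par_list (y # rest))" using assms(2) Ws by (intro par_list_pomset) auto
  have a4: "pom_iso W (par_comp x (par_list (y # rest)))" using assms(3) Ws by simp
  show ?thesis unfolding is_parallel_def is_empty_pomset_def
    using a1 a2 a3 a4 by blast
qed


lemma par_unit_parallel:
  fixes F :: "'q set" and \<delta> :: "'q \<Rightarrow> 'a \<Rightarrow> 'q set" and W :: "'a lposet"
  assumes ws: "well_structured F \<gamma>" and pu: "par_unit_run F \<delta> \<gamma> q W q'"
  shows "is_parallel W"
proof -
  from pu obtain xs where xs: "pom_iso W (par_list (map snd xs))" "q' \<in> \<gamma> q (mset (map fst xs))"
     "\<forall>i<length xs. \<exists>qf\<in>F. run F \<delta> \<gamma> (fst (xs ! i)) (snd (xs ! i)) qf"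
    unfolding par_unit_run_def by (elim exE conjE)
  have c: "length xs \<ge> 2 \<and> (\<forall>i<length xs. car (snd (xs ! i)) \<noteq> {} \<and> is_pomset (snd (xs ! i)))"
    by (rule comp_nonempty[OF ws xs(2,3)])
  have "\<forall>V\<in>set (map snd xs). car V \<noteq> {} \<and> is_pomset V"
  proof
    fix V assume "V \<in> set (map snd xs)"
    then obtain i where "i < length (map snd xs)" "(map snd xs) ! i = V" unfolding in_set_conv_nth by blast
    thus "car V \<noteq> {} \<and> is_pomset V" using c by auto
  qed
  moreover have "length (map snd xs) \<ge> 2" using c by simp
  ultimately show ?thesis using par_list_parallel xs(1) by blast
qed
lemma transfer1:
  assumes "pom_iso W V" "seq_unit_run F \<delta> \<gamma> q V q'" shows "seq_unit_run F \<delta> \<gamma> q W q'"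
proof -
  obtain a where a: "pom_iso V (prim a)" "q' \<in> \<delta> q a" using assms(2) unfolding seq_unit_run_def by blast
  have "pom_iso W (prim a)" using pom_iso_trans[OF assms(1) a(1)] .
  thus ?thesis using a(2) unfolding seq_unit_run_def by blast
qed

lemma transfer2:
  assumes "pom_iso W V" "composite_run F \<delta> \<gamma> q V q'" shows "composite_run F \<delta> \<gamma> q W q'"
proof -
  obtain U1 U2 q'' where c: "pom_iso V (seq_comp U1 U2)" "run F \<delta> \<gamma> q U1 q''" "run F \<delta> \<gamma> q'' U2 q'"
     "\<not> trivial_run F \<delta> \<gamma> q U1 q''" "\<not> trivial_run F \<delta> \<gamma> q'' U2 q'"
    using assms(2) unfolding composite_run_def by blast
  have "pom_iso W (seq_comp U1 U2)" using pom_iso_trans[OF assms(1) c(1)] .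
  thus ?thesis using c(2-5) unfolding composite_run_def by blast
qed

lemma transfer3:
  assumes "pom_iso W V" "par_unit_run F \<delta> \<gamma> q V q'" shows "par_unit_run F \<delta> \<gamma> q W q'"
proof -
  from assms(2) obtain xs where xs: "pom_iso V (par_list (map snd xs))" "q' \<in> \<gamma> q (mset (map fst xs))"
     "\<forall>i<length xs. \<exists>qf\<in>F. run F \<delta> \<gamma> (fst (xs ! i)) (snd (xs ! i)) qf"
    unfolding par_unit_run_def by (elim exE conjE)
  have "pom_iso W (par_list (map snd xs))" using pom_iso_trans[OF assms(1) xs(1)] .
  with xs(2,3) show ?thesis unfolding par_unit_run_def by (intro exI[of _ xs] conjI)
qed

lemma transfer4:
  assumes "pom_iso W V" "is_sequential W" shows "is_sequential V"
proof -
  obtain U1 U2 where u: "is_pomset U1" "is_pomset U2" "\<not> is_empty_pomset U1" "\<not> is_empty_pomset U2"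
     "pom_iso W (seq_comp U1 U2)" using assms(2) unfolding is_sequential_def by blast
  have "pom_iso V (seq_comp U1 U2)" using pom_iso_trans[OF pom_iso_sym[OF assms(1)] u(5)] .
  thus ?thesis using u(1-4) unfolding is_sequential_def by blast
qed

lemma transfer5:
  assumes "pom_iso W V" "is_parallel W" shows "is_parallel V"
proof -
  obtain U1 U2 where u: "is_pomset U1" "is_pomset U2" "\<not> is_empty_pomset U1" "\<not> is_empty_pomset U2"
     "pom_iso W (par_comp U1 U2)" using assms(2) unfolding is_parallel_def by blast
  have "pom_iso V (par_comp U1 U2)" using pom_iso_trans[OF pom_iso_sym[OF assms(1)] u(5)] .
  thus ?thesis using u(1-4) unfolding is_parallel_def by blast
qed

lemma main:
  assumes ws: "well_structured F \<gamma>"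
  shows "run F \<delta> \<gamma> q W q' \<Longrightarrow> (card (car W) = 1 \<longrightarrow> seq_unit_run F \<delta> \<gamma> q W q')
     \<and> (is_sequential W \<longrightarrow> composite_run F \<delta> \<gamma> q W q')
     \<and> (is_parallel W \<longrightarrow> par_unit_run F \<delta> \<gamma> q W q')"
proof (induction rule: run.induct)
  case (R1 W q)
  have fin: "finite (car W)" using R1(1) unfolding is_pomset_def by simp
  have "car W = {}" using pom_iso_empty[OF R1(2)] by (simp add: pempty_def)
  hence c0: "card (car W) = 0" by simp
  have "\<not> is_sequential W" using seq_card[OF fin] c0 by linarith
  moreover have "\<not> is_parallel W" using par_card[OF fin] c0 by linarith
  ultimately show ?case using c0 by simp
next
  case (R2 W a q' q)
  have fin: "finite (car W)" using R2(1) unfolding is_pomset_def by simp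
  have c1: "card (car W) = 1" using pom_iso_card[OF R2(2)] by (simp add: prim_def)
  have su: "seq_unit_run F \<delta> \<gamma> q W q'" using R2(2,3) unfolding seq_unit_run_def by blast
  have "\<not> is_sequential W" using seq_card[OF fin] c1 by linarith
  moreover have "\<not> is_parallel W" using par_card[OF fin] c1 by linarith
  ultimately show ?case using su by simp
next
  case (R3 W U V q q'' q')
  have fin: "finite (car W)" using R3.hyps(1) unfolding is_pomset_def by simp
  have pU: "is_pomset U" using run_pomset[OF R3.hyps(3)] .
  have pV: "is_pomset V" using run_pomset[OF R3.hyps(4)] .
  show ?case
  proof (cases "car U = {}")
    case True
    have e: "q = q''" using empty_run[OF ws R3.hyps(3) True] .
    have iso: "pom_iso W V" using pom_iso_trans[OF R3.hyps(2) seq_empty_left[OF pU True]] .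
    have cd: "card (car W) = card (car V)" using pom_iso_card[OF iso] .
    have IH: "(card (car V) = 1 \<longrightarrow> seq_unit_run F \<delta> \<gamma> q'' V q')
     \<and> (is_sequential V \<longrightarrow> composite_run F \<delta> \<gamma> q'' V q')
     \<and> (is_parallel V \<longrightarrow> par_unit_run F \<delta> \<gamma> q'' V q')" by (rule R3.IH(2))
    show ?thesis
    proof (intro conjI impI)
      assume "card (car W) = 1" thus "seq_unit_run F \<delta> \<gamma> q W q'" using IH cd e transfer1[OF iso] by metis
    next
      assume "is_sequential W" thus "composite_run F \<delta> \<gamma> q W q'" using IH e transfer2[OF iso] transfer4[OF iso] by metis
    next
      assume "is_parallel W" thus "par_unit_run F \<delta> \<gamma> q W q'" using IH e transfer3[OF iso] transfer5[OF iso] by metis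
    qed
  next
    case False
    show ?thesis
    proof (cases "car V = {}")
      case True
      have e: "q'' = q'" using empty_run[OF ws R3.hyps(4) True] .
      have iso: "pom_iso W U" using pom_iso_trans[OF R3.hyps(2) seq_empty_right[OF pV True]] .
      have cd: "card (car W) = card (car U)" using pom_iso_card[OF iso] .
      have IH: "(card (car U) = 1 \<longrightarrow> seq_unit_run F \<delta> \<gamma> q U q'')
       \<and> (is_sequential U \<longrightarrow> composite_run F \<delta> \<gamma> q U q'')
       \<and> (is_parallel U \<longrightarrow> par_unit_run F \<delta> \<gamma> q U q'')" by (rule R3.IH(1))
      show ?thesis
      proof (intro conjI impI)
        assume "card (car W) = 1" thus "seq_unit_run F \<delta> \<gamma> q W q'" using IH cd e transfer1[OF iso] by metis
      next
        assume "is_sequential W" thus "composite_run F \<delta> \<gamma> q W q'" using IH e transfer2[OF iso] transfer4[OF iso] by metis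
      next
        assume "is_parallel W" thus "par_unit_run F \<delta> \<gamma> q W q'" using IH e transfer3[OF iso] transfer5[OF iso] by metis
      qed
    next
      case F2: False
      have sq: "is_sequential W" unfolding is_sequential_def is_empty_pomset_def
        using pU pV False F2 R3.hyps(2) by blast
      have n1: "\<not> pom_iso U pempty"
      proof
        assume "pom_iso U pempty"
        from pom_iso_empty[OF this] have "car U = {}" by (simp add: pempty_def)
        thus False using False by simp
      qed
      have n2: "\<not> pom_iso V pempty"
      proof
        assume "pom_iso V pempty"
        from pom_iso_empty[OF this] have "car V = {}" by (simp add: pempty_def)
        thus False using F2 by simp
      qed
      have cr: "composite_run F \<delta> \<gamma> q W q'" unfolding composite_run_def trivial_run_def
        using R3.hyps(2,3,4) n1 n2 by blast
      have "\<not> card (car W) = 1" using seq_card[OF fin sq] by linarith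
      moreover have "\<not> is_parallel W" using seq_par_excl[OF sq] by blast
      ultimately show ?thesis using cr by simp
    qed
  qed
next
  case (R4 W xs q' q)
  have fin: "finite (car W)" using R4(1) unfolding is_pomset_def by simp
  have runs: "\<forall>i<length xs. \<exists>qf\<in>F. run F \<delta> \<gamma> (fst (xs ! i)) (snd (xs ! i)) qf"
    using R4(4) by blast
  have pu: "par_unit_run F \<delta> \<gamma> q W q'" unfolding par_unit_run_def
    using R4(2,3) runs by (intro exI[of _ xs] conjI)
  have pr: "is_parallel W" using par_unit_parallel[OF ws pu] .
  have "\<not> card (car W) = 1" using par_card[OF fin pr] by linarith
  moreover have "\<not> is_sequential W" using seq_par_excl[of W] pr by blast
  ultimately show ?case using pu by simp
qed



theorem lemma5p5:
  fixes F :: "'q set" and \<delta> :: "'q \<Rightarrow> 'a::finite \<Rightarrow> 'q set"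
    and \<gamma> :: "'q \<Rightarrow> 'q multiset \<Rightarrow> 'q set" and U :: "'a lposet"
  assumes "pomset_automaton F \<delta> \<gamma>"
    and "well_structured F \<gamma>"
    and "run F \<delta> \<gamma> q U q'"
  shows "(trivial_run F \<delta> \<gamma> q U q' \<longleftrightarrow> is_empty_pomset U)
       \<and> (seq_unit_run F \<delta> \<gamma> q U q' \<longleftrightarrow> is_primitive U)
       \<and> (composite_run F \<delta> \<gamma> q U q' \<longleftrightarrow> is_sequential U)
       \<and> (par_unit_run F \<delta> \<gamma> q U q' \<longleftrightarrow> is_parallel U)"
proof -
  note ws = assms(2) and r = assms(3)
  have pU: "is_pomset U" using run_pomset[OF r] .
  have m: "(card (car U) = 1 \<longrightarrow> seq_unit_run F \<delta> \<gamma> q U q')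
     \<and> (is_sequential U \<longrightarrow> composite_run F \<delta> \<gamma> q U q')
     \<and> (is_parallel U \<longrightarrow> par_unit_run F \<delta> \<gamma> q U q')" using main[OF ws r] .
  have i: "trivial_run F \<delta> \<gamma> q U q' \<longleftrightarrow> is_empty_pomset U"
  proof
    assume "trivial_run F \<delta> \<gamma> q U q'"
    hence "pom_iso U pempty" unfolding trivial_run_def by blast
    from pom_iso_empty[OF this] show "is_empty_pomset U" unfolding is_empty_pomset_def by (simp add: pempty_def)
  next
    assume "is_empty_pomset U"
    hence e: "car U = {}" unfolding is_empty_pomset_def .
    have "q = q'" using empty_run[OF ws r e] .
    moreover have "pom_iso U pempty" using empty_iso[OF pU e] .
    ultimately show "trivial_run F \<delta> \<gamma> q U q'" unfolding trivial_run_def by blast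
  qed
  have ii: "seq_unit_run F \<delta> \<gamma> q U q' \<longleftrightarrow> is_primitive U"
  proof
    assume "seq_unit_run F \<delta> \<gamma> q U q'"
    then obtain a where "pom_iso U (prim a)" unfolding seq_unit_run_def by blast
    from pom_iso_card[OF this] show "is_primitive U" unfolding is_primitive_def by (simp add: prim_def)
  next
    assume "is_primitive U" thus "seq_unit_run F \<delta> \<gamma> q U q'" using m unfolding is_primitive_def by blast
  qed
  have iii: "composite_run F \<delta> \<gamma> q U q' \<longleftrightarrow> is_sequential U"
  proof
    assume "composite_run F \<delta> \<gamma> q U q'"
    then obtain U1 U2 q'' where c: "pom_iso U (seq_comp U1 U2)" "run F \<delta> \<gamma> q U1 q''" "run F \<delta> \<gamma> q'' U2 q'"
      "\<not> trivial_run F \<delta> \<gamma> q U1 q''" "\<not> trivial_run F \<delta> \<gamma> q'' U2 q'"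
      unfolding composite_run_def by blast
    have p1: "is_pomset U1" using run_pomset[OF c(2)] .
    have p2: "is_pomset U2" using run_pomset[OF c(3)] .
    have n1: "car U1 \<noteq> {}"
    proof
      assume e: "car U1 = {}"
      have "q = q''" using empty_run[OF ws c(2) e] .
      moreover have "pom_iso U1 pempty" using empty_iso[OF p1 e] .
      ultimately show False using c(4) unfolding trivial_run_def by blast
    qed
    have n2: "car U2 \<noteq> {}"
    proof
      assume e: "car U2 = {}"
      have "q'' = q'" using empty_run[OF ws c(3) e] .
      moreover have "pom_iso U2 pempty" using empty_iso[OF p2 e] .
      ultimately show False using c(5) unfolding trivial_run_def by blast
    qed
    show "is_sequential U" unfolding is_sequential_def is_empty_pomset_def using p1 p2 n1 n2 c(1) by blast
  next
    assume "is_sequential U" thus "composite_run F \<delta> \<gamma> q U q'" using m by blast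
  qed
  have iv: "par_unit_run F \<delta> \<gamma> q U q' \<longleftrightarrow> is_parallel U"
  proof
    assume "par_unit_run F \<delta> \<gamma> q U q'" thus "is_parallel U" using par_unit_parallel[OF ws] by blast
  next
    assume "is_parallel U" thus "par_unit_run F \<delta> \<gamma> q U q'" using m by blast
  qed
  show ?thesis using i ii iii iv by blast
qed


end
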